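(* Given $\kappa>1$, let $0<\delta<1/4$ be such that $1-2\delta>\delta^{1-1/\kappa}$. Let $G$ be a bipartite graph with vertex parts $U$ and $R$. Then there exists $U'\subseteq U$ such that $G'=G[U'\cup R]$ (with parts $U'$ and $R$) is $\delta^2$-reduced, $d_{\mathrm{avg}}(U')\ge \delta\, d_{\mathrm{avg}}(U)$, and for every real $x\ge\kappa$ we have $$|U'|\,d_{\mathrm{avg}}(U')^x\ \ge\ \delta^x\,|U|\,d_{\mathrm{avg}}(U)^x.$$
   Context: For a set $S$ of vertices of a graph, $d_{\mathrm{avg}}(S)$ is the average degree of the vertices of $S$. A bipartite graph with vertex parts $U$ and $R$ is $\delta$-reduced if every $u\in U$ has degree in $[\delta\, d_{\mathrm{avg}}(U),\ \delta^{-1}d_{\mathrm{avg}}(U)]$ (degrees and averages taken in that bipartite graph). *)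

theory Defs
  imports Complex_Main
begin

text \<open>Degrees of vertices of U in G[U' \<union> R] only depend on R.\<close>

definition bip_graph :: "('a \<Rightarrow> 'a \<Rightarrow> bool) \<Rightarrow> 'a set \<Rightarrow> 'a set \<Rightarrow> bool" where
  "bip_graph E U R \<longleftrightarrow> finite U \<and> finite R \<and> U \<inter> R = {} \<and>
     (\<forall>a b. E a b \<longleftrightarrow> E b a) \<and>
     (\<forall>a b. E a b \<longrightarrow> (a \<in> U \<and> b \<in> R) \<or> (a \<in> R \<and> b \<in> U))"

definition bdeg :: "('a \<Rightarrow> 'a \<Rightarrow> bool) \<Rightarrow> 'a set \<Rightarrow> 'a \<Rightarrow> real" where
  "bdeg E R u = real (card {r \<in> R. E u r})"

text \<open>Average degree of the vertices of S (0 if S is empty).\<close>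
definition davg :: "('a \<Rightarrow> 'a \<Rightarrow> bool) \<Rightarrow> 'a set \<Rightarrow> 'a set \<Rightarrow> real" where
  "davg E R S = (\<Sum>u\<in>S. bdeg E R u) / real (card S)"

definition reduced :: "real \<Rightarrow> ('a \<Rightarrow> 'a \<Rightarrow> bool) \<Rightarrow> 'a set \<Rightarrow> 'a set \<Rightarrow> bool" where
  "reduced \<delta> E U R \<longleftrightarrow>
     (\<forall>u\<in>U. \<delta> * davg E R U \<le> bdeg E R u \<and> bdeg E R u \<le> davg E R U / \<delta>)"

end

theory Submission imports Defs begin
lemma keyH:
  fixes n h e eH \<delta> \<kappa> x :: real
  assumes d0: "0<\<delta>" and d1: "\<delta><1" and k1: "\<kappa>>1" and xk: "x\<ge>\<kappa>" and h0: "0<h" and hn: "h \<le> \<delta>*n"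
    and e0: "0<e" and eH: "\<delta> powr (1-1/\<kappa>) * e \<le> eH"
  shows "n*(e/n) powr x \<le> h*(eH/h) powr x"
proof -
  have n0: "n > 0" proof (rule ccontr) assume "\<not> n > 0" hence "\<delta>*n \<le> 0" using d0 by (simp add: mult_nonneg_nonpos) thus False using h0 hn by simp qed
  have A: "n*(e/n) powr x = n powr (1-x) * e powr x" using n0 e0
    by (simp add: powr_divide powr_diff)
  have B: "h*(eH/h) powr x = h powr (1-x) * eH powr x" using h0 e0 eH
    by (simp add: powr_divide powr_diff)
  have C1: "(\<delta>*n) powr (1-x) \<le> h powr (1-x)"
    by (rule powr_mono2') (use k1 xk h0 hn in auto)
  have C2: "(\<delta> powr (1-1/\<kappa>) * e) powr x \<le> eH powr x"
    by (rule powr_mono2) (use k1 xk e0 eH in auto)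
  have D: "(\<delta>*n) powr (1-x) * (\<delta> powr (1-1/\<kappa>) * e) powr x
      = \<delta> powr (1 - x/\<kappa>) * (n powr (1-x) * e powr x)"
  proof -
    have "(\<delta>*n) powr (1-x) * (\<delta> powr (1-1/\<kappa>) * e) powr x
      = (\<delta> powr (1-x) * \<delta> powr ((1-1/\<kappa>)*x)) * (n powr (1-x) * e powr x)"
      using d0 n0 e0 by (simp add: powr_mult powr_powr)
    also have "\<delta> powr (1-x) * \<delta> powr ((1-1/\<kappa>)*x) = \<delta> powr (1 - x/\<kappa>)"
      by (simp add: powr_add[symmetric] algebra_simps)
    finally show ?thesis .
  qed
  have E: "1 \<le> \<delta> powr (1 - x/\<kappa>)"
  proof -
    have "x/\<kappa> \<ge> 1" using k1 xk by simp
    hence "\<delta> powr (1 - x/\<kappa>) = (1/\<delta>) powr (x/\<kappa> - 1)" using d0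
      by (simp add: powr_divide powr_minus_divide powr_diff)
    also have "\<dots> \<ge> 1" using d0 d1 \<open>x/\<kappa> \<ge> 1\<close> by (intro ge_one_powr_ge_zero) auto
    finally show ?thesis .
  qed
  have F: "0 \<le> n powr (1-x) * e powr x" by simp
  have "n*(e/n) powr x \<le> \<delta> powr (1 - x/\<kappa>) * (n powr (1-x) * e powr x)"
    using A mult_right_mono[OF E F] by simp
  also have "\<dots> = (\<delta>*n) powr (1-x) * (\<delta> powr (1-1/\<kappa>) * e) powr x" using D by simp
  also have "\<dots> \<le> h powr (1-x) * eH powr x"
    by (rule mult_mono[OF C1 C2]) auto
  finally show ?thesis using B by simp
qed

lemma keyM:
  fixes n m e eM \<delta> x :: real
  assumes d0: "0<\<delta>" and x1: "x\<ge>1" and m0: "0<m" and mn: "m \<le> n"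
    and e0: "0<e" and eM: "\<delta> * e \<le> eM"
  shows "\<delta> powr x * n*(e/n) powr x \<le> m*(eM/m) powr x"
proof -
  have n0: "n > 0" using m0 mn by simp
  have A: "\<delta> powr x * n*(e/n) powr x = n powr (1-x) * (\<delta>*e) powr x" using n0 e0 d0
    by (simp add: powr_divide powr_diff powr_mult)
  have B: "m*(eM/m) powr x = m powr (1-x) * eM powr x" using m0 e0 eM d0
    by (simp add: powr_divide powr_diff)
  have C1: "n powr (1-x) \<le> m powr (1-x)"
    by (rule powr_mono2') (use x1 m0 mn in auto)
  have C2: "(\<delta> * e) powr x \<le> eM powr x"
    by (rule powr_mono2) (use x1 e0 eM d0 in auto)
  show ?thesis unfolding A B by (rule mult_mono[OF C1 C2]) auto
qed

lemma main_ind: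
  fixes \<kappa> \<delta> :: real and E :: "'a \<Rightarrow> 'a \<Rightarrow> bool" and R S :: "'a set"
  assumes k1: "\<kappa> > 1" and d0: "0 < \<delta>" and d1: "\<delta> < 1/4"
    and hyp: "1 - 2*\<delta> > \<delta> powr (1 - 1/\<kappa>)"
    and fin: "finite S"
  shows "\<exists>M \<subseteq> S. reduced (\<delta>^2) E M R \<and> davg E R M \<ge> \<delta> * davg E R S \<and>
           (\<forall>x::real. x \<ge> \<kappa> \<longrightarrow>
              real (card M) * davg E R M powr x \<ge> \<delta> powr x * real (card S) * davg E R S powr x)"
  using fin
proof (induction "card S" arbitrary: S rule: less_induct)
  case less
  define deg where "deg = bdeg E R"
  have deg0: "\<And>u. deg u \<ge> 0" unfolding deg_def bdeg_def by simp
  define e where "e = sum deg S"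
  define n where "n = real (card S)"
  define a where "a = davg E R S"
  have a_def': "a = e / n" unfolding a_def e_def n_def davg_def deg_def by simp
  have e0: "e \<ge> 0" unfolding e_def using deg0 by (simp add: sum_nonneg)
  show ?case
  proof (cases "e = 0")
    case True
    have z: "\<forall>u\<in>S. deg u = 0" using True less.prems deg0 unfolding e_def
      by (simp add: sum_nonneg_eq_0_iff)
    have a0: "a = 0" using True a_def' by simp
    have "reduced (\<delta>^2) E S R" unfolding reduced_def using z a0
      unfolding deg_def a_def by simp
    moreover have "\<forall>x::real. x \<ge> \<kappa> \<longrightarrow>
              real (card S) * davg E R S powr x \<ge> \<delta> powr x * real (card S) * davg E R S powr x"
      using a0 unfolding a_def by simp
    ultimately show ?thesis using a0 unfolding a_def by (intro exI[of _ S]) auto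
  next
    case False
    hence epos: "e > 0" using e0 by simp
    hence Sne: "S \<noteq> {}" unfolding e_def by auto
    hence npos: "n > 0" unfolding n_def using less.prems by (simp add: card_gt_0_iff)
    have apos: "a > 0" using a_def' epos npos by simp
    define \<beta> where "\<beta> = \<delta> powr (1 - 1/\<kappa>)"
    have bpos: "\<beta> > 0" unfolding \<beta>_def using d0 by simp
    define H where "H = {u\<in>S. deg u > a/\<delta>}"
    define L where "L = {u\<in>S. deg u < \<delta>*a}"
    define M where "M = {u\<in>S. \<delta>*a \<le> deg u \<and> deg u \<le> a/\<delta>}"
    have finH: "finite H" "finite L" "finite M" unfolding H_def L_def M_def using less.prems by auto
    have HS: "H \<subseteq> S" unfolding H_def by auto
    have MS: "M \<subseteq> S" unfolding M_def by auto
    have sumH_le: "sum deg H \<le> e" unfolding e_def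
      by (rule sum_mono2[OF less.prems HS]) (use deg0 in auto)
    show ?thesis
    proof (cases "sum deg H \<ge> \<beta> * e")
      case True
      have Hne: "H \<noteq> {}" proof assume "H = {}" hence "\<beta> * e \<le> 0" using True by simp moreover have "\<beta> * e > 0" using bpos epos by simp ultimately show False by simp qed
      have "(\<Sum>u\<in>H. a/\<delta>) < sum deg H"
        by (rule sum_strict_mono[OF finH(1) Hne]) (auto simp: H_def)
      hence c1: "real (card H) * (a/\<delta>) < sum deg H" by simp
      hence "real (card H) * (a/\<delta>) < n * a" using sumH_le a_def' npos by simp
      hence "real (card H) * a < (\<delta> * n) * a" using d0 by (simp add: field_simps)
      hence hlt: "real (card H) < \<delta> * n" using apos by simp
      have hpos: "real (card H) > 0" using Hne finH(1) by (simp add: card_gt_0_iff)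
      have "\<delta> * n \<le> 1 * n" by (rule mult_right_mono) (use d1 npos in auto)
      hence "real (card H) < n" using hlt by linarith
      hence "card H < card S" unfolding n_def by simp
      then obtain M' where M': "M' \<subseteq> H" "reduced (\<delta>^2) E M' R" "davg E R M' \<ge> \<delta> * davg E R H"
        "\<forall>x::real. x \<ge> \<kappa> \<longrightarrow>
              real (card M') * davg E R M' powr x \<ge> \<delta> powr x * real (card H) * davg E R H powr x"
        using less.hyps finH(1) by blast
      have dH: "davg E R H = sum deg H / real (card H)" unfolding davg_def deg_def by simp
      have "a/\<delta> < davg E R H" unfolding dH using c1 hpos by (simp add: field_simps)
      moreover have "a \<le> a/\<delta>" using apos d0 d1 by (simp add: field_simps)
      ultimately have "a \<le> davg E R H" by simp
      hence "\<delta> * a \<le> \<delta> * davg E R H" using d0 by (intro mult_left_mono) auto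
      hence g2: "davg E R M' \<ge> \<delta> * a" using M'(3) by linarith
      have g3: "real (card M') * davg E R M' powr x \<ge> \<delta> powr x * n * a powr x" if xk: "x \<ge> \<kappa>" for x
      proof -
        have "n*(e/n) powr x \<le> real (card H) * (sum deg H / real (card H)) powr x"
          by (rule keyH[OF d0 _ k1 xk hpos _ epos]) (use d1 hlt True \<beta>_def in auto)
        hence "\<delta> powr x * (n * a powr x) \<le> \<delta> powr x * (real (card H) * davg E R H powr x)"
          unfolding a_def' dH by (intro mult_left_mono) auto
        thus ?thesis using M'(4) xk by (metis (no_types, lifting) order_trans mult.assoc)
      qed
      show ?thesis using M' HS g2 g3 unfolding a_def n_def by (intro exI[of _ M']) auto
    next
      case False
      have sumL: "sum deg L \<le> \<delta> * e"
      proof -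
        have "sum deg L \<le> real (card L) * (\<delta>*a)"
          using sum_bounded_above[of L deg "\<delta>*a"] by (auto simp: L_def)
        also have "\<dots> \<le> n * (\<delta>*a)"
        proof (rule mult_right_mono)
          show "real (card L) \<le> n" unfolding n_def L_def using less.prems by (simp add: card_mono)
        qed (use d0 apos in auto)
        also have "\<dots> = \<delta> * e" using a_def' npos by simp
        finally show ?thesis .
      qed
      have part: "S = L \<union> M \<union> H" unfolding L_def M_def H_def by auto
      have "e = sum deg L + sum deg M + sum deg H"
      proof -
        have "\<delta>*a \<le> 1*a" by (rule mult_right_mono) (use d1 apos in auto)
        moreover have "a \<le> a/\<delta>" using apos d0 d1 by (simp add: field_simps)
        ultimately have da: "\<delta>*a \<le> a/\<delta>" by linarith
        have d1': "L \<inter> M = {}" "(L \<union> M) \<inter> H = {}" unfolding L_def M_def H_def using da by auto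
        have "sum deg (L \<union> M \<union> H) = sum deg (L \<union> M) + sum deg H"
          by (rule sum.union_disjoint) (use finH d1' in auto)
        also have "sum deg (L \<union> M) = sum deg L + sum deg M"
          by (rule sum.union_disjoint) (use finH d1' in auto)
        finally show ?thesis using part e_def by metis
      qed
      moreover have "\<beta> * e < (1 - 2*\<delta>) * e"
        by (rule mult_strict_right_mono) (use hyp epos \<beta>_def in auto)
      ultimately have sumM: "sum deg M > \<delta> * e" using sumL False by (simp add: algebra_simps)
      have "\<delta> * e > 0" using d0 epos by simp
      hence Mne: "M \<noteq> {}" using sumM by auto
      have mpos: "real (card M) > 0" using Mne finH(3) by (simp add: card_gt_0_iff)
      have mn: "real (card M) \<le> n" unfolding n_def using MS less.prems by (simp add: card_mono)
      have dM: "davg E R M = sum deg M / real (card M)" unfolding davg_def deg_def by simp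
      have lo: "real (card M) * (\<delta>*a) \<le> sum deg M"
        using sum_bounded_below[of M "\<delta>*a" deg] by (auto simp: M_def)
      have hi: "sum deg M \<le> real (card M) * (a/\<delta>)"
        using sum_bounded_above[of M deg "a/\<delta>"] by (auto simp: M_def)
      have dlo: "\<delta> * a \<le> davg E R M" unfolding dM using lo mpos by (simp add: field_simps)
      have dhi: "davg E R M \<le> a/\<delta>" unfolding dM using hi mpos by (simp add: field_simps)
      have red: "reduced (\<delta>^2) E M R" unfolding reduced_def
      proof
        fix u assume u: "u \<in> M"
        have "\<delta>^2 * davg E R M \<le> \<delta>^2 * (a/\<delta>)" using dhi d0 by (intro mult_left_mono) auto
        also have "\<dots> = \<delta> * a" using d0 by (simp add: power2_eq_square)
        also have "\<dots> \<le> bdeg E R u" using u unfolding M_def deg_def by simp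
        finally have 1: "\<delta>^2 * davg E R M \<le> bdeg E R u" .
        have "bdeg E R u \<le> a/\<delta>" using u unfolding M_def deg_def by simp
        also have "a/\<delta> = (\<delta>*a)/\<delta>^2" using d0 by (simp add: power2_eq_square)
        also have "\<dots> \<le> davg E R M / \<delta>^2" using dlo d0 by (simp add: divide_right_mono)
        finally show "\<delta>^2 * davg E R M \<le> bdeg E R u \<and> bdeg E R u \<le> davg E R M / \<delta>^2"
          using 1 by simp
      qed
      have g3: "real (card M) * davg E R M powr x \<ge> \<delta> powr x * n * a powr x" if xk: "x \<ge> \<kappa>" for x
        unfolding a_def' dM
        by (rule keyM[OF d0 _ mpos mn epos]) (use xk k1 sumM in auto)
      show ?thesis using MS red dlo g3 unfolding a_def n_def by (intro exI[of _ M]) auto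
    qed
  qed
qed

theorem lemma3p3:
  fixes \<kappa> \<delta> :: real and E :: "'a \<Rightarrow> 'a \<Rightarrow> bool" and U R :: "'a set"
  assumes "\<kappa> > 1" and "0 < \<delta>" and "\<delta> < 1/4"
    and "1 - 2*\<delta> > \<delta> powr (1 - 1/\<kappa>)"
    and "bip_graph E U R"
  shows "\<exists>U' \<subseteq> U. reduced (\<delta>^2) E U' R \<and> davg E R U' \<ge> \<delta> * davg E R U \<and>
           (\<forall>x::real. x \<ge> \<kappa> \<longrightarrow>
              real (card U') * davg E R U' powr x \<ge> \<delta> powr x * real (card U) * davg E R U powr x)"
  using main_ind[OF assms(1-4)] assms(5) unfolding bip_graph_def by blast

end
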